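(* Let $(\Lambda,d)$ be a topological $1$-graph. For all $f\in C_c(\Lambda^0)$ and $\xi,\eta\in C_c(\Lambda^1)$ we have, in $C^*(G_\Lambda)$, (i) $\Psi_1(\xi)^*\Psi_1(\eta)=\Psi_0(\langle\xi,\eta\rangle)$ and (ii) $\Psi_0(f)\Psi_1(\xi)=\Psi_1(\phi(f)\xi)$.
   Context: A topological $1$-graph is a pair $(\Lambda,d)$ with $\Lambda$ a small category whose object set $\Lambda^0$ and morphism set $\Lambda$ are second-countable locally compact Hausdorff spaces, $r,s$ continuous with $s$ a local homeomorphism, composition continuous and open, $d:\Lambda\to\mathbb{N}$ a continuous functor, with unique factorization: for $d(\lambda)=m+n$ there is a unique composable $(\xi,\eta)$ with $\lambda=\xi\eta$, $d(\xi)=m$, $d(\eta)=n$. Objects are identified with degree-$0$ paths, $\Lambda^1=d^{-1}(1)$, $\lambda(p,q)$ denotes the degree-$(q-p)$ segment. The path space $X_\Lambda$ consists of degree-preserving continuous functors $x:\Omega_{1,m}\to\Lambda$ ($m\in\mathbb{N}\cup\{\infty\}$, where $\Omega_{1,m}$ is the discrete category with objects $\{p\le m\}$, morphisms $(p,q)$, $p\le q\le m$, of degree $q-p$), with $r(x)=x(0)$, $d(x)=m$, concatenation $\lambda x$ and shift $(\sigma^mx)(0,p)=x(m,m+p)$. The path groupoid $G_\Lambda$ has morphisms $(\lambda x,d(\lambda)-d(\mu),\mu x)$ with $s(\lambda)=s(\mu)=r(x)$, range/source the first/third coordinates, product $(x,m,y)(y,n,z)=(x,m+n,z)$, inverse $(y,-m,x)$,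 unit space identified with $X_\Lambda$; with its standard topology (basis $Z(U*_sV,m)\cap Z(F,m)^c$ for $U,V\subset\Lambda$ open, $F\subset\Lambda*_s\Lambda$ compact, where $Z(F,m)=\{(\lambda x,m,\mu x):(\lambda,\mu)\in F,d(\lambda)-d(\mu)=m\}$) it is a locally compact Hausdorff $r$-discrete groupoid with counting-measure Haar system, so $C_c(G_\Lambda)\subset C^*(G_\Lambda)$ with convolution product, and $C_0(G_\Lambda^{(0)})\subset C^*(G_\Lambda)$. For $\xi,\eta\in C_c(\Lambda^1)$, $\langle\xi,\eta\rangle(v)=\sum_{e\in\Lambda^1,s(e)=v}\overline{\xi(e)}\eta(e)$, and for $f\in C_0(\Lambda^0)$, $(\phi(f)\xi)(e)=f(r(e))\xi(e)$. Define $\Psi_0(f)\in C_0(G_\Lambda^{(0)})\subset C^*(G_\Lambda)$ by $\Psi_0(f)(x,0,x)=f(r(x))$, and for $\xi\in C_c(\Lambda^1)$ define $\Psi_1(\xi)\in C_c(G_\Lambda)$ by $\Psi_1(\xi)(x,m,y)=\delta_{m,1}\delta_{\sigma^1x,y}\,\xi(x(0,1))$. *)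

theory Defs
  imports "HOL-Analysis.Analysis" "HOL-Library.Extended_Nat"
begin

text \<open>The morphism space of the small category Lambda is the whole carrier type 'a
 (a second countable Hausdorff space; local compactness is assumed below).
 Objects are identified with identity morphisms (the image of r); composition
 cmp a b means "a followed-by-left b" i.e. the product a b, defined when s a = r b.\<close>

definition lam0 :: "('a \<Rightarrow> 'a) \<Rightarrow> 'a set" where
  "lam0 r = range r"

definition lam1 :: "('a \<Rightarrow> nat) \<Rightarrow> 'a set" where
  "lam1 d = {e. d e = 1}"

definition composable :: "('a \<Rightarrow> 'a) \<Rightarrow> ('a \<Rightarrow> 'a) \<Rightarrow> ('a \<times> 'a) set" where
  "composable r s = {(a, b). s a = r b}"

definition local_homeo :: "('a::topological_space \<Rightarrow> 'b::topological_space) \<Rightarrow> bool" where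
  "local_homeo f \<longleftrightarrow> continuous_on UNIV f \<and>
     (\<forall>x. \<exists>U g. open U \<and> x \<in> U \<and> open (f ` U) \<and> homeomorphism U (f ` U) f g)"

definition topological_1graph ::
  "('a::{t2_space, second_countable_topology} \<Rightarrow> 'a) \<Rightarrow> ('a \<Rightarrow> 'a) \<Rightarrow> ('a \<Rightarrow> 'a \<Rightarrow> 'a)
     \<Rightarrow> ('a \<Rightarrow> nat) \<Rightarrow> bool" where
  "topological_1graph r s cmp d \<longleftrightarrow>
     \<comment> \<open>small category with objects = identity morphisms\<close>
     (\<forall>a. r (r a) = r a \<and> s (r a) = r a \<and> r (s a) = s a \<and> s (s a) = s a) \<and>
     (\<forall>a b. s a = r b \<longrightarrow> r (cmp a b) = r a \<and> s (cmp a b) = s b) \<and>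
     (\<forall>a b c. s a = r b \<longrightarrow> s b = r c \<longrightarrow> cmp (cmp a b) c = cmp a (cmp b c)) \<and>
     (\<forall>a. cmp (r a) a = a \<and> cmp a (s a) = a) \<and>
     \<comment> \<open>topology: locally compact (second countable Hausdorff by the type class)\<close>
     locally_compact_space (euclidean :: 'a topology) \<and>
     locally_compact_space (top_of_set (lam0 r)) \<and>
     continuous_on UNIV r \<and> continuous_on UNIV s \<and> local_homeo s \<and>
     continuous_on (composable r s) (\<lambda>(a, b). cmp a b) \<and>
     (\<forall>U. openin (top_of_set (composable r s)) U \<longrightarrow> open ((\<lambda>(a, b). cmp a b) ` U)) \<and>
     \<comment> \<open>degree functor, continuous into the discrete space nat\<close>
     continuous_on UNIV d \<and>
     (\<forall>a. d (r a) = 0) \<and>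
     (\<forall>a b. s a = r b \<longrightarrow> d (cmp a b) = d a + d b) \<and>
     \<comment> \<open>unique factorisation\<close>
     (\<forall>l m n. d l = m + n \<longrightarrow>
        (\<exists>!(a, b). s a = r b \<and> l = cmp a b \<and> d a = m \<and> d b = n))"

text \<open>A path x of degree m (m in nat or infinity) is a degree-preserving functor
 from Omega_{1,m}; it is represented by the pair (m, X) where X p q is the image of the
 morphism (p,q) for p \<le> q \<le> m, and X p q = undefined off that domain (so that equal
 functors give equal representations). Continuity is automatic as Omega is discrete.\<close>

type_synonym 'a path = "enat \<times> (nat \<Rightarrow> nat \<Rightarrow> 'a)"

definition in_dom :: "enat \<Rightarrow> nat \<Rightarrow> nat \<Rightarrow> bool" where
  "in_dom m p q \<longleftrightarrow> p \<le> q \<and> enat q \<le> m"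

definition is_path :: "('a \<Rightarrow> 'a) \<Rightarrow> ('a \<Rightarrow> 'a) \<Rightarrow> ('a \<Rightarrow> 'a \<Rightarrow> 'a) \<Rightarrow> ('a \<Rightarrow> nat)
     \<Rightarrow> 'a path \<Rightarrow> bool" where
  "is_path r s cmp d x \<longleftrightarrow>
     (\<forall>p q. \<not> in_dom (fst x) p q \<longrightarrow> snd x p q = undefined) \<and>
     (\<forall>p q. in_dom (fst x) p q \<longrightarrow>
        d (snd x p q) = q - p \<and> r (snd x p q) = snd x p p \<and> s (snd x p q) = snd x q q) \<and>
     (\<forall>p q t. in_dom (fst x) p q \<longrightarrow> in_dom (fst x) q t \<longrightarrow>
        snd x p t = cmp (snd x p q) (snd x q t))"

definition path_space :: "('a \<Rightarrow> 'a) \<Rightarrow> ('a \<Rightarrow> 'a) \<Rightarrow> ('a \<Rightarrow> 'a \<Rightarrow> 'a) \<Rightarrow> ('a \<Rightarrow> nat)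
     \<Rightarrow> 'a path set" where
  "path_space r s cmp d = {x. is_path r s cmp d x}"

definition prange :: "'a path \<Rightarrow> 'a" where
  "prange x = snd x 0 0"

definition pdeg :: "'a path \<Rightarrow> enat" where
  "pdeg x = fst x"

definition shift :: "nat \<Rightarrow> 'a path \<Rightarrow> 'a path" where
  "shift n x = (fst x - enat n,
     (\<lambda>p q. if in_dom (fst x - enat n) p q then snd x (n + p) (n + q) else undefined))"

definition concat :: "('a \<Rightarrow> 'a) \<Rightarrow> ('a \<Rightarrow> 'a) \<Rightarrow> ('a \<Rightarrow> 'a \<Rightarrow> 'a) \<Rightarrow> ('a \<Rightarrow> nat)
     \<Rightarrow> 'a \<Rightarrow> 'a path \<Rightarrow> 'a path" where
  "concat r s cmp d l x = (THE z. is_path r s cmp d z \<and> fst z = enat (d l) + fst x \<and>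
       snd z 0 (d l) = l \<and> shift (d l) z = x)"

type_synonym 'a gmor = "'a path \<times> int \<times> 'a path"

definition path_groupoid :: "('a \<Rightarrow> 'a) \<Rightarrow> ('a \<Rightarrow> 'a) \<Rightarrow> ('a \<Rightarrow> 'a \<Rightarrow> 'a) \<Rightarrow> ('a \<Rightarrow> nat)
     \<Rightarrow> 'a gmor set" where
  "path_groupoid r s cmp d =
     {(concat r s cmp d l x, int (d l) - int (d m), concat r s cmp d m x) | l m x.
        x \<in> path_space r s cmp d \<and> s l = prange x \<and> s m = prange x}"

text \<open>Convolution in C_c(G_Lambda) (counting-measure Haar system):
 (F * H)(gamma) = sum over beta with s(beta) = s(gamma) of F(gamma beta^{-1}) H(beta);
 for gamma = (x,k,y) and beta = (z,n,y), gamma beta^{-1} = (x, k-n, z).\<close>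
definition conv :: "('a \<Rightarrow> 'a) \<Rightarrow> ('a \<Rightarrow> 'a) \<Rightarrow> ('a \<Rightarrow> 'a \<Rightarrow> 'a) \<Rightarrow> ('a \<Rightarrow> nat)
     \<Rightarrow> ('a gmor \<Rightarrow> complex) \<Rightarrow> ('a gmor \<Rightarrow> complex) \<Rightarrow> 'a gmor \<Rightarrow> complex" where
  "conv r s cmp d F H = (\<lambda>(x, k, y).
     infsum (\<lambda>(z, n). F (x, k - n, z) * H (z, n, y))
       {(z, n). (z, n, y) \<in> path_groupoid r s cmp d})"

definition gstar :: "('a gmor \<Rightarrow> complex) \<Rightarrow> 'a gmor \<Rightarrow> complex" where
  "gstar F = (\<lambda>(x, k, y). cnj (F (y, - k, x)))"

definition Cc :: "'a::topological_space set \<Rightarrow> ('a \<Rightarrow> complex) \<Rightarrow> bool" where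
  "Cc S f \<longleftrightarrow> continuous_on S f \<and> (\<forall>x. x \<notin> S \<longrightarrow> f x = 0) \<and>
     (\<exists>K. compact K \<and> K \<subseteq> S \<and> (\<forall>x \<in> S - K. f x = 0))"

definition inner1 :: "('a \<Rightarrow> 'a) \<Rightarrow> ('a \<Rightarrow> nat) \<Rightarrow> ('a \<Rightarrow> complex) \<Rightarrow> ('a \<Rightarrow> complex)
     \<Rightarrow> 'a \<Rightarrow> complex" where
  "inner1 s d \<xi> \<eta> v = infsum (\<lambda>e. cnj (\<xi> e) * \<eta> e) {e \<in> lam1 d. s e = v}"

definition phi :: "('a \<Rightarrow> 'a) \<Rightarrow> ('a \<Rightarrow> complex) \<Rightarrow> ('a \<Rightarrow> complex) \<Rightarrow> 'a \<Rightarrow> complex" where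
  "phi r f \<xi> e = f (r e) * \<xi> e"

definition Psi0 :: "('a \<Rightarrow> complex) \<Rightarrow> 'a gmor \<Rightarrow> complex" where
  "Psi0 f = (\<lambda>(x, k, y). if k = 0 \<and> x = y then f (prange x) else 0)"

definition Psi1 :: "('a \<Rightarrow> complex) \<Rightarrow> 'a gmor \<Rightarrow> complex" where
  "Psi1 \<xi> = (\<lambda>(x, k, y). if k = 1 \<and> shift 1 x = y then \<xi> (snd x 0 1) else 0)"

end

theory Submission
  imports Defs
begin


locale cat1 =
  fixes r s :: "'a \<Rightarrow> 'a" and cmp :: "'a \<Rightarrow> 'a \<Rightarrow> 'a" and d :: "'a \<Rightarrow> nat"
  assumes rr: "r (r a) = r a" and sr: "s (r a) = r a" and rs: "r (s a) = s a" and ss: "s (s a) = s a"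
  and rc: "s a = r b \<Longrightarrow> r (cmp a b) = r a"
  and sc: "s a = r b \<Longrightarrow> s (cmp a b) = s b"
  and asc: "s a = r b \<Longrightarrow> s b = r c \<Longrightarrow> cmp (cmp a b) c = cmp a (cmp b c)"
  and ul: "cmp (r a) a = a" and ur: "cmp a (s a) = a"
  and dr: "d (r a) = 0"
  and dc: "s a = r b \<Longrightarrow> d (cmp a b) = d a + d b"
  and uf: "d l = m + n \<Longrightarrow> (\<exists>!(a, b). s a = r b \<and> l = cmp a b \<and> d a = m \<and> d b = n)"
begin

lemma ds: "d (s a) = 0" by (metis dr rs)

definition fac where "fac l m n = (THE (a,b). s a = r b \<and> l = cmp a b \<and> d a = m \<and> d b = n)"

lemma fac_prop: assumes "d l = m + n"
  shows "s (fst (fac l m n)) = r (snd (fac l m n)) \<and> l = cmp (fst (fac l m n)) (snd (fac l m n))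
     \<and> d (fst (fac l m n)) = m \<and> d (snd (fac l m n)) = n"
proof -
  have "case fac l m n of (a,b) \<Rightarrow> s a = r b \<and> l = cmp a b \<and> d a = m \<and> d b = n"
    unfolding fac_def using theI'[OF uf[OF assms]] .
  thus ?thesis by (auto split: prod.splits)
qed

lemma fac_uniq: assumes "s a = r b" "l = cmp a b" "d a = m" "d b = n"
  shows "fac l m n = (a,b)"
proof -
  have "d l = m + n" using assms dc by auto
  show ?thesis unfolding fac_def
    by (rule the1_equality[OF uf[OF \<open>d l = m + n\<close>]]) (use assms in auto)
qed

definition seg where "seg l p q = fst (fac (snd (fac l p (d l - p))) (q - p) (d l - q))"

lemma seg_ex: assumes "p \<le> q" "q \<le> d l"
  shows "\<exists>a b c. s a = r b \<and> s b = r c \<and> l = cmp a (cmp b c) \<and> d a = p \<and> d b = q - p \<and> d c = d l - q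
     \<and> b = seg l p q"
proof -
  let ?a = "fst (fac l p (d l - p))" let ?y = "snd (fac l p (d l - p))"
  have 1: "s ?a = r ?y \<and> l = cmp ?a ?y \<and> d ?a = p \<and> d ?y = d l - p" using fac_prop[of l p "d l - p"] assms by auto
  let ?b = "fst (fac ?y (q - p) (d l - q))" let ?c = "snd (fac ?y (q - p) (d l - q))"
  have 2: "s ?b = r ?c \<and> ?y = cmp ?b ?c \<and> d ?b = q - p \<and> d ?c = d l - q"
    using fac_prop[of ?y "q - p" "d l - q"] assms 1 by auto
  have "s ?a = r ?b" using 1 2 rc by metis
  thus ?thesis using 1 2 unfolding seg_def by metis
qed

lemma seg_uniq: assumes "p \<le> q" "q \<le> d l" "s a = r b" "s b = r c" "l = cmp a (cmp b c)" "d a = p" "d b = q - p"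
  shows "seg l p q = b"
proof -
  have dl: "d l = d a + d b + d c" using assms dc rc by auto
  have "fac l p (d l - p) = (a, cmp b c)"
    by (rule fac_uniq) (use assms rc dc dl in auto)
  moreover have "fac (cmp b c) (q - p) (d l - q) = (b, c)"
    by (rule fac_uniq) (use assms dl in auto)
  ultimately show ?thesis unfolding seg_def by simp
qed

lemma seg_d: "p \<le> q \<Longrightarrow> q \<le> d l \<Longrightarrow> d (seg l p q) = q - p"
  using seg_ex by metis

lemma seg_r: assumes "p \<le> q" "q \<le> d l" shows "r (seg l p q) = seg l p p"
proof -
  obtain a b c where h: "s a = r b" "s b = r c" "l = cmp a (cmp b c)" "d a = p" "d b = q - p" "d c = d l - q"
     "b = seg l p q" using seg_ex[OF assms] by blast
  have e: "cmp (r b) (cmp b c) = cmp b c" using ul[of "cmp b c"] rc[OF h(2)] by simp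
  have "seg l p p = r b"
    apply (rule seg_uniq[where a=a and c="cmp b c"])
    using assms apply simp
    using assms apply simp
    using h(1) rr apply simp
    using sr rc[OF h(2)] apply simp
    using h(3) e apply simp
    using h(4) apply simp
    using dr apply simp
    done
  thus ?thesis using h(7) by simp
qed

lemma seg_s: assumes "p \<le> q" "q \<le> d l" shows "s (seg l p q) = seg l q q"
proof -
  obtain a b c where h: "s a = r b" "s b = r c" "l = cmp a (cmp b c)" "d a = p" "d b = q - p" "d c = d l - q"
     "b = seg l p q" using seg_ex[OF assms] by blast
  have e: "cmp (s b) c = c" using ul[of c] h(2) by simp
  have e2: "l = cmp (cmp a b) (cmp (s b) c)" using e h(3) asc[OF h(1) h(2)] by simp
  have p1: "s (cmp a b) = r (s b)" using sc[OF h(1)] rs by simp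
  have p2: "s (s b) = r c" using ss h(2) sr by metis
  have p3: "d (cmp a b) = q" using dc[OF h(1)] h(4) h(5) assms by simp
  have p4: "d (s b) = q - q" using ds by simp
  have "seg l q q = s b"
    using seg_uniq[OF _ assms(2) p1 p2 e2 p3 p4] by simp
  thus ?thesis using h(7) by simp
qed

lemma seg_trans: assumes "p \<le> q" "q \<le> t" "t \<le> d l"
  shows "seg l p t = cmp (seg l p q) (seg l q t)"
proof -
  obtain a b c where h: "s a = r b" "s b = r c" "l = cmp a (cmp b c)" "d a = p" "d b = t - p" "d c = d l - t"
     "b = seg l p t" using seg_ex[OF order_trans[OF assms(1,2)] assms(3)] by blast
  have "d b = (q - p) + (t - q)" using h(5) assms by simp
  then obtain b1 b2 where h2: "s b1 = r b2" "b = cmp b1 b2" "d b1 = q - p" "d b2 = t - q"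
    using uf[of b "q - p" "t - q"] by auto
  have sb2: "s b2 = s b" "r b1 = r b" using h2 sc rc by auto
  have l1: "l = cmp a (cmp b1 (cmp b2 c))" using h(3) h2(2) asc[OF h2(1)] sb2 h(2) by simp
  have l2: "l = cmp (cmp a b1) (cmp b2 c)" using l1 asc[of a b1 "cmp b2 c"] h(1) sb2 rc[of b2 c] h2(1) h(2) by simp
  have q1: "s a = r b1" using h(1) sb2 by simp
  have q2: "s b1 = r (cmp b2 c)" using h2(1) rc[of b2 c] h(2) sb2 by simp
  have A: "seg l p q = b1"
    using seg_uniq[OF assms(1) _ q1 q2 l1 h(4) h2(3)] assms by simp
  have q3: "s (cmp a b1) = r b2" using sc[of a b1] h(1) sb2 h2(1) by simp
  have q4: "s b2 = r c" using h(2) sb2 by simp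
  have q5: "d (cmp a b1) = q" using dc[of a b1] q1 h(4) h2(3) assms by simp
  have B: "seg l q t = b2"
    using seg_uniq[OF assms(2) assms(3) q3 q4 l2 q5 h2(4)] by simp
  show ?thesis using h(7) h2(2) A B by simp
qed

lemma seg_all: "seg l 0 (d l) = l"
proof -
  have "l = cmp (r l) (cmp l (s l))" using ul ur by metis
  moreover have "s (r l) = r l" by (rule sr)
  moreover have "s l = r (s l)" using rs by metis
  ultimately show ?thesis using seg_uniq[of 0 "d l" l "r l" l "s l"] dr by simp
qed

lemma seg_end: "seg l (d l) (d l) = s l"
  using seg_s[of 0 "d l" l] seg_all by simp

lemma seg_start: "seg l 0 0 = r l"
  using seg_r[of 0 "d l" l] seg_all by simp

end


lemma en1: "L \<le> q \<Longrightarrow> (enat q \<le> enat L + m) = (enat (q - L) \<le> m)" by (cases m) auto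
lemma en2: "q \<le> L \<Longrightarrow> enat q \<le> enat L + m" by (cases m) auto
lemma en3: "enat L + m - enat L = m" by (cases m) auto

context cat1 begin

abbreviation "ip \<equiv> is_path r s cmp d"

lemma pathD:
  assumes "ip x" "in_dom (fst x) p q"
  shows "d (snd x p q) = q - p" "r (snd x p q) = snd x p p" "s (snd x p q) = snd x q q"
  using assms unfolding is_path_def by auto

lemma pathC:
  assumes "ip x" "in_dom (fst x) p q" "in_dom (fst x) q t"
  shows "snd x p t = cmp (snd x p q) (snd x q t)"
  using assms unfolding is_path_def by auto

lemma pathU: "ip x \<Longrightarrow> \<not> in_dom (fst x) p q \<Longrightarrow> snd x p q = undefined"
  unfolding is_path_def by auto

definition cz :: "'a \<Rightarrow> 'a path \<Rightarrow> 'a path" where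
"cz l x = (enat (d l) + fst x, \<lambda>p q. if in_dom (enat (d l) + fst x) p q then
   (if q \<le> d l then seg l p q else if d l \<le> p then snd x (p - d l) (q - d l)
    else cmp (seg l p (d l)) (snd x 0 (q - d l))) else undefined)"

lemma cz_is_path:
  assumes P: "ip x" and sl: "s l = prange x"
  shows "ip (cz l x)"
proof -
  define L where "L = d l"
  define M where "M = enat L + fst x"
  define Z where "Z = snd (cz l x)"
  have fz: "fst (cz l x) = M" unfolding cz_def M_def L_def by simp
  have Zd: "Z p q = (if in_dom M p q then
     (if q \<le> L then seg l p q else if L \<le> p then snd x (p - L) (q - L)
      else cmp (seg l p L) (snd x 0 (q - L))) else undefined)" for p q
    unfolding Z_def cz_def M_def L_def by simp
  have x00: "snd x 0 0 = s l" using sl unfolding prange_def by simp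
  have sLL: "seg l L L = s l" unfolding L_def by (rule seg_end)
  have domx: "in_dom M p q \<Longrightarrow> L \<le> p \<Longrightarrow> in_dom (fst x) (p - L) (q - L)" for p q
    unfolding in_dom_def M_def using en1[of L q "fst x"] by auto
  have domx0: "in_dom M p q \<Longrightarrow> L \<le> q \<Longrightarrow> in_dom (fst x) 0 (q - L)" for p q
    unfolding in_dom_def M_def using en1[of L q "fst x"] by auto
  have domL: "q \<le> L \<Longrightarrow> p \<le> q \<Longrightarrow> in_dom M p q" for p q
    unfolding in_dom_def M_def using en2 by auto
  have domle: "in_dom M p q \<Longrightarrow> p \<le> p' \<Longrightarrow> p' \<le> q' \<Longrightarrow> q' \<le> q \<Longrightarrow> in_dom M p' q'" for p q p' q'
    unfolding in_dom_def by (meson enat_ord_simps(1) order_trans)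
  have diag: "in_dom M p p \<Longrightarrow> Z p p = (if p \<le> L then seg l p p else snd x (p - L) (p - L))" for p
    using Zd[of p p] by auto
  have D: "d (Z p q) = q - p \<and> r (Z p q) = Z p p \<and> s (Z p q) = Z q q" if dm: "in_dom M p q" for p q
  proof -
    have pq: "p \<le> q" using dm unfolding in_dom_def by simp
    have dpp: "in_dom M p p" "in_dom M q q" using domle[OF dm] pq by auto
    show ?thesis
    proof (cases "q \<le> L")
      case True
      then show ?thesis using Zd[of p q] dm diag[OF dpp(1)] diag[OF dpp(2)] pq seg_d seg_r seg_s
        unfolding L_def by auto
    next
      case qL: False
      show ?thesis
      proof (cases "L \<le> p")
        case True
        have dx: "in_dom (fst x) (p - L) (q - L)" using domx[OF dm True] .
        have zpq: "Z p q = snd x (p - L) (q - L)" using Zd[of p q] dm qL True by simp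
        have zqq: "Z q q = snd x (q - L) (q - L)" using diag[OF dpp(2)] qL by simp
        have zpp: "Z p p = snd x (p - L) (p - L)"
        proof (cases "p = L")
          case True then show ?thesis using diag[OF dpp(1)] sLL x00 by simp
        next
          case False then show ?thesis using diag[OF dpp(1)] \<open>L \<le> p\<close> by simp
        qed
        show ?thesis using pathD[OF P dx] zpq zqq zpp pq \<open>L \<le> p\<close> by simp
      next
        case pL: False
        have dx: "in_dom (fst x) 0 (q - L)" using domx0[OF dm] qL by simp
        have zpq: "Z p q = cmp (seg l p L) (snd x 0 (q - L))" using Zd[of p q] dm qL pL by simp
        have zqq: "Z q q = snd x (q - L) (q - L)" using diag[OF dpp(2)] qL by simp
        have zpp: "Z p p = seg l p p" using diag[OF dpp(1)] pL by simp
        have cm: "s (seg l p L) = r (snd x 0 (q - L))"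
          using seg_s[of p L l] pL sLL pathD(2)[OF P dx] x00 unfolding L_def by simp
        have "d (Z p q) = (L - p) + (q - L)" using zpq dc[OF cm] seg_d[of p L l] pathD(1)[OF P dx] pL
          unfolding L_def by simp
        moreover have "r (Z p q) = Z p p" using zpq rc[OF cm] seg_r[of p L l] pL zpp unfolding L_def by simp
        moreover have "s (Z p q) = Z q q" using zpq sc[OF cm] pathD(3)[OF P dx] zqq by simp
        ultimately show ?thesis using pL qL by simp
      qed
    qed
  qed
  have C: "Z p t = cmp (Z p q) (Z q t)" if d1: "in_dom M p q" and d2: "in_dom M q t" for p q t
  proof -
    have pq: "p \<le> q" and qt: "q \<le> t" using d1 d2 unfolding in_dom_def by auto
    have dpt: "in_dom M p t" using d1 d2 unfolding in_dom_def by auto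
    show ?thesis
    proof (cases "t \<le> L")
      case True
      then show ?thesis using Zd[of p q] Zd[of q t] Zd[of p t] d1 d2 dpt pq qt seg_trans[of p q t l]
        unfolding L_def by auto
    next
      case tL: False
      have dxt: "in_dom (fst x) 0 (t - L)" using domx0[OF dpt] tL by simp
      have rxt: "r (snd x 0 (t - L)) = s l" using pathD(2)[OF P dxt] x00 by simp
      show ?thesis
      proof (cases "q \<le> L")
        case qL: True
        show ?thesis
        proof (cases "p = L")
          case True
          hence "q = L" using pq qL by simp
          then have "Z p t = snd x 0 (t - L)" "Z q t = snd x 0 (t - L)" "Z p q = s l"
            using Zd[of p t] Zd[of q t] Zd[of p q] dpt d2 d1 tL True sLL by auto
          then show ?thesis using ul[of "snd x 0 (t - L)"] rxt by simp
        next
          case False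
          hence pL: "p < L" using pq qL by simp
          have zpt: "Z p t = cmp (seg l p L) (snd x 0 (t - L))" using Zd[of p t] dpt tL pL by simp
          have zpq: "Z p q = seg l p q" using Zd[of p q] d1 qL by simp
          show ?thesis
          proof (cases "q = L")
            case True
            then show ?thesis using zpt zpq Zd[of q t] d2 tL by simp
          next
            case False
            hence qL': "q < L" using qL by simp
            have zqt: "Z q t = cmp (seg l q L) (snd x 0 (t - L))" using Zd[of q t] d2 tL qL' by simp
            have c1: "s (seg l p q) = r (seg l q L)" using seg_s[of p q l] seg_r[of q L l] pq qL unfolding L_def by simp
            have c2: "s (seg l q L) = r (snd x 0 (t - L))" using seg_s[of q L l] sLL rxt qL unfolding L_def by simp
            show ?thesis using zpt zpq zqt asc[OF c1 c2] seg_trans[of p q L l] pq qL unfolding L_def by simp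
          qed
        qed
      next
        case qL: False
        have dx1: "in_dom (fst x) (q - L) (t - L)" using domx[OF d2] qL by simp
        have zqt: "Z q t = snd x (q - L) (t - L)" using Zd[of q t] d2 tL qL by simp
        show ?thesis
        proof (cases "L \<le> p")
          case True
          have dx2: "in_dom (fst x) (p - L) (q - L)" using domx[OF d1 True] .
          have "Z p q = snd x (p - L) (q - L)" "Z p t = snd x (p - L) (t - L)"
            using Zd[of p q] Zd[of p t] d1 dpt qL tL True by auto
          then show ?thesis using zqt pathC[OF P dx2 dx1] by simp
        next
          case pL: False
          have dx2: "in_dom (fst x) 0 (q - L)" using domx0[OF d1] qL by simp
          have zpq: "Z p q = cmp (seg l p L) (snd x 0 (q - L))" using Zd[of p q] d1 qL pL by simp
          have zpt: "Z p t = cmp (seg l p L) (snd x 0 (t - L))" using Zd[of p t] dpt tL pL by simp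
          have c1: "s (seg l p L) = r (snd x 0 (q - L))"
            using seg_s[of p L l] pL sLL pathD(2)[OF P dx2] x00 unfolding L_def by simp
          have c2: "s (snd x 0 (q - L)) = r (snd x (q - L) (t - L))"
            using pathD(3)[OF P dx2] pathD(2)[OF P dx1] by simp
          show ?thesis using zpq zpt zqt asc[OF c1 c2] pathC[OF P dx2 dx1] by simp
        qed
      qed
    qed
  qed
  show ?thesis unfolding is_path_def
    using D C Zd fz unfolding Z_def by auto
qed

lemma cz_fst: "fst (cz l x) = enat (d l) + fst x" unfolding cz_def by simp

lemma cz_snd: "snd (cz l x) 0 (d l) = l"
  unfolding cz_def in_dom_def using en2[of "d l" "d l" "fst x"] seg_all by simp

lemma cz_shift: assumes P: "ip x" and sl: "s l = prange x"
  shows "shift (d l) (cz l x) = x"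
proof -
  have x00: "snd x 0 0 = s l" using sl unfolding prange_def by simp
  have f: "fst (cz l x) - enat (d l) = fst x" using cz_fst en3 by simp
  have "snd (shift (d l) (cz l x)) p q = snd x p q" for p q
  proof (cases "in_dom (fst x) p q")
    case True
    have dm: "in_dom (enat (d l) + fst x) (d l + p) (d l + q)"
      using True en1[of "d l" "d l + q" "fst x"] unfolding in_dom_def by simp
    have "snd (shift (d l) (cz l x)) p q = snd (cz l x) (d l + p) (d l + q)"
      unfolding shift_def using f True by simp
    also have "\<dots> = snd x p q"
    proof (cases "q = 0")
      case True
      hence "p = 0" using \<open>in_dom (fst x) p q\<close> unfolding in_dom_def by simp
      then show ?thesis using True dm x00 seg_end unfolding cz_def by simp
    next
      case False then show ?thesis using dm unfolding cz_def by simp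
    qed
    finally show ?thesis .
  next
    case False
    then show ?thesis unfolding shift_def using f pathU[OF P False] by simp
  qed
  then show ?thesis using f by (simp add: prod_eq_iff shift_def)
qed

lemma cz_uniq: assumes P: "ip x" and W: "ip w" and fw: "fst w = enat (d l) + fst x"
  and w0: "snd w 0 (d l) = l" and sh: "shift (d l) w = x"
  shows "w = cz l x"
proof -
  define L where "L = d l"
  define M where "M = enat L + fst x"
  have fw': "fst w = M" using fw unfolding M_def L_def .
  have dL: "in_dom M 0 L" unfolding in_dom_def M_def using en2 by simp
  have f: "fst w - enat L = fst x" using fw' en3 unfolding M_def by simp
  have c1: "snd w p q = seg l p q" if "p \<le> q" "q \<le> L" for p q
  proof -
    have d1: "in_dom M 0 p" "in_dom M p q" "in_dom M q L" "in_dom M p L" using dL that unfolding in_dom_def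
      by (auto intro: order_trans[of _ "enat L"])
    have e: "l = cmp (snd w 0 p) (cmp (snd w p q) (snd w q L))"
      using w0 pathC[OF W, of 0 p L] pathC[OF W, of p q L] d1 fw' unfolding L_def by simp
    show ?thesis
      apply (rule sym, rule seg_uniq[OF that(1) _ _ _ e])
      using that d1 pathD[OF W] fw' unfolding L_def by auto
  qed
  have c2: "snd w p q = snd x (p - L) (q - L)" if "in_dom M p q" "L \<le> p" for p q
  proof -
    have dx: "in_dom (fst x) (p - L) (q - L)" using that en1[of L q "fst x"] unfolding in_dom_def M_def by auto
    have "L \<le> q" using that unfolding in_dom_def by simp
    have "snd (shift L w) (p - L) (q - L) = snd x (p - L) (q - L)" using sh unfolding L_def by simp
    moreover have "snd (shift L w) (p - L) (q - L) = snd w p q" unfolding shift_def using f dx that \<open>L \<le> q\<close> by simp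
    ultimately show ?thesis by simp
  qed
  have "snd w p q = snd (cz l x) p q" for p q
  proof (cases "in_dom M p q")
    case False
    then show ?thesis using pathU[OF W] fw' unfolding cz_def M_def L_def by simp
  next
    case True
    have pq: "p \<le> q" using True unfolding in_dom_def by simp
    show ?thesis
    proof (cases "q \<le> L")
      case True then show ?thesis using c1 pq \<open>in_dom M p q\<close> unfolding cz_def M_def L_def by simp
    next
      case qL: False
      show ?thesis
      proof (cases "L \<le> p")
        case True then show ?thesis using c2 \<open>in_dom M p q\<close> qL unfolding cz_def M_def L_def by simp
      next
        case False
        have d1: "in_dom M p L" "in_dom M L q" using True qL False unfolding in_dom_def by (auto intro: order_trans[of _ "enat q"])
        have "snd w p q = cmp (snd w p L) (snd w L q)" using pathC[OF W] d1 fw' by simp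
        also have "\<dots> = cmp (seg l p L) (snd x 0 (q - L))" using c1[of p L] c2[OF d1(2)] False by simp
        finally show ?thesis using \<open>in_dom M p q\<close> qL False unfolding cz_def M_def L_def by simp
      qed
    qed
  qed
  then show ?thesis using fw cz_fst by (simp add: prod_eq_iff fun_eq_iff)
qed

lemma concat_eq: assumes P: "ip x" and sl: "s l = prange x"
  shows "concat r s cmp d l x = cz l x"
  unfolding concat_def
  apply (rule the_equality)
  using cz_is_path[OF P sl] cz_fst cz_snd cz_shift[OF P sl] apply simp
  using cz_uniq[OF P] by blast

lemma concat_props: assumes P: "ip x" and sl: "s l = prange x"
  shows "ip (concat r s cmp d l x)" "fst (concat r s cmp d l x) = enat (d l) + fst x"
    "snd (concat r s cmp d l x) 0 (d l) = l" "shift (d l) (concat r s cmp d l x) = x"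
  using concat_eq[OF assms] cz_is_path[OF P sl] cz_fst cz_snd cz_shift[OF P sl] by simp_all

lemma concat_uniq: assumes P: "ip x" and W: "ip w" and fw: "fst w = enat (d l) + fst x"
  and w0: "snd w 0 (d l) = l" and sh: "shift (d l) w = x"
  shows "concat r s cmp d l x = w"
proof -
  have "s l = prange x"
  proof -
    have dd: "in_dom (fst w) 0 (d l)" using fw en2 unfolding in_dom_def by auto
    have "s l = snd w (d l) (d l)" using pathD(3)[OF W dd] w0 by simp
    moreover have "snd (shift (d l) w) 0 0 = snd w (d l) (d l)"
      unfolding shift_def in_dom_def using fw en3 by (simp add: zero_enat_def[symmetric])
    ultimately show ?thesis using sh unfolding prange_def by simp
  qed
  then show ?thesis using concat_eq[OF P] cz_uniq[OF P W fw w0 sh] by simp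
qed

end


lemma en4: "enat 1 \<le> m \<Longrightarrow> m = enat 1 + (m - enat 1)" by (cases m) auto

context cat1 begin

abbreviation "G \<equiv> path_groupoid r s cmp d"

lemma G_elim: assumes "(z1, k, z2) \<in> G"
  obtains l m x' where "ip x'" "s l = prange x'" "s m = prange x'"
    "z1 = concat r s cmp d l x'" "z2 = concat r s cmp d m x'" "k = int (d l) - int (d m)"
proof -
  have "\<exists>l m x'. (z1, k, z2) = (concat r s cmp d l x', int (d l) - int (d m), concat r s cmp d m x') \<and>
    x' \<in> path_space r s cmp d \<and> s l = prange x' \<and> s m = prange x'"
    using assms unfolding path_groupoid_def mem_Collect_eq by assumption
  then obtain l m x' where h: "(z1, k, z2) = (concat r s cmp d l x', int (d l) - int (d m), concat r s cmp d m x')"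
    "x' \<in> path_space r s cmp d" "s l = prange x'" "s m = prange x'"
    by (elim exE conjE)
  have "ip x'" using h(2) unfolding path_space_def by simp
  moreover have "z1 = concat r s cmp d l x'" "z2 = concat r s cmp d m x'" "k = int (d l) - int (d m)"
    using h(1) by simp_all
  ultimately show thesis using that h(3,4) by blast
qed

lemma G_paths: assumes "(z1, k, z2) \<in> G" shows "ip z1" "ip z2"
proof -
  obtain l m x' where h: "ip x'" "s l = prange x'" "s m = prange x'"
    "z1 = concat r s cmp d l x'" "z2 = concat r s cmp d m x'" "k = int (d l) - int (d m)"
    by (rule G_elim[OF assms])
  show "ip z1" using concat_props(1)[OF h(1) h(2)] h(4) by simp
  show "ip z2" using concat_props(1)[OF h(1) h(3)] h(5) by simp
qed

lemma shift0: "ip x \<Longrightarrow> shift 0 x = x"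
proof -
  assume P: "ip x"
  have "snd (shift 0 x) p q = snd x p q" for p q
    using pathU[OF P, of p q] unfolding shift_def by (simp add: zero_enat_def[symmetric])
  then show ?thesis unfolding shift_def by (simp add: prod_eq_iff fun_eq_iff zero_enat_def[symmetric])
qed

lemma concat_vertex: assumes "ip x" shows "concat r s cmp d (snd x 0 0) x = x"
proof -
  have dm: "in_dom (fst x) 0 0" unfolding in_dom_def by (simp add: zero_enat_def[symmetric])
  have "d (snd x 0 0) = 0" using pathD(1)[OF assms dm] by simp
  then show ?thesis
    using concat_uniq[OF assms assms, of "snd x 0 0"] shift0[OF assms] by (simp add: zero_enat_def[symmetric])
qed

lemma G_one: assumes "(z, 1, x) \<in> G"
  shows "ip z" "ip x" "enat 1 \<le> fst z" "in_dom (fst z) 0 1"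
proof -
  obtain l m x' where h: "ip x'" "s l = prange x'" "s m = prange x'"
    "z = concat r s cmp d l x'" "x = concat r s cmp d m x'" "(1::int) = int (d l) - int (d m)"
    by (rule G_elim[OF assms])
  show "ip z" "ip x" using G_paths[OF assms] by auto
  have "d l \<ge> 1" using h(6) by simp
  then show "enat 1 \<le> fst z" using concat_props(2)[OF h(1) h(2)] h(4)
    by (cases "fst x'") auto
  then show "in_dom (fst z) 0 1" unfolding in_dom_def by simp
qed

lemma part2: assumes "\<gamma> \<in> G"
  shows "conv r s cmp d (Psi0 f) (Psi1 \<xi>) \<gamma> = Psi1 (phi r f \<xi>) \<gamma>"
proof -
  obtain x k y where g: "\<gamma> = (x, k, y)" by (cases \<gamma>) auto
  have L: "conv r s cmp d (Psi0 f) (Psi1 \<xi>) \<gamma> =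
     infsum (\<lambda>(z, n). Psi0 f (x, k - n, z) * Psi1 \<xi> (z, n, y)) {(z, n). (z, n, y) \<in> G}"
    unfolding conv_def g by simp
  show ?thesis
  proof (cases "k = 1 \<and> shift 1 x = y")
    case True
    have mem: "(x, 1, y) \<in> G" using assms g True by simp
    have "infsum (\<lambda>(z, n). Psi0 f (x, k - n, z) * Psi1 \<xi> (z, n, y)) {(z, n). (z, n, y) \<in> G}
        = infsum (\<lambda>(z, n). Psi0 f (x, k - n, z) * Psi1 \<xi> (z, n, y)) {(x, 1)}"
    proof (rule infsum_cong_neutral)
      fix a assume "a \<in> {(x, 1)} - {(z, n). (z, n, y) \<in> G}"
      then show "(\<lambda>(z, n). Psi0 f (x, k - n, z) * Psi1 \<xi> (z, n, y)) a = 0" using mem by simp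
    next
      fix a assume "a \<in> {(z, n). (z, n, y) \<in> G} - {(x, 1)}"
      then obtain z n where a: "a = (z, n)" "(z, n) \<noteq> (x, 1)" by (cases a) auto
      have "Psi0 f (x, k - n, z) = 0 \<or> Psi1 \<xi> (z, n, y) = 0"
        using a(2) True unfolding Psi0_def Psi1_def by auto
      then show "(\<lambda>(z, n). Psi0 f (x, k - n, z) * Psi1 \<xi> (z, n, y)) a = 0" using a(1) by auto
    qed simp
    also have "\<dots> = f (prange x) * \<xi> (snd x 0 1)" using True by (simp add: Psi0_def Psi1_def)
    also have "\<dots> = Psi1 (phi r f \<xi>) \<gamma>"
    proof -
      have "r (snd x 0 1) = snd x 0 0" using pathD(2)[OF G_one(1)[OF mem] G_one(4)[OF mem]] .
      then show ?thesis using True g by (simp add: Psi1_def phi_def prange_def)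
    qed
    finally show ?thesis using L by simp
  next
    case False
    have "infsum (\<lambda>(z, n). Psi0 f (x, k - n, z) * Psi1 \<xi> (z, n, y)) {(z, n). (z, n, y) \<in> G} = 0"
    proof (rule infsum_0)
      fix a assume "a \<in> {(z, n). (z, n, y) \<in> G}"
      obtain z n where a: "a = (z, n)" by (cases a) auto
      have "Psi0 f (x, k - n, z) = 0 \<or> Psi1 \<xi> (z, n, y) = 0"
        using False unfolding Psi0_def Psi1_def by auto
      then show "(\<lambda>(z, n). Psi0 f (x, k - n, z) * Psi1 \<xi> (z, n, y)) a = 0" using a by auto
    qed
    then show ?thesis using L False g by (auto simp: Psi1_def)
  qed
qed

lemma part1: assumes "\<gamma> \<in> G"
  shows "conv r s cmp d (gstar (Psi1 \<xi>)) (Psi1 \<eta>) \<gamma> = Psi0 (inner1 s d \<xi> \<eta>) \<gamma>"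
proof -
  obtain x k y where g: "\<gamma> = (x, k, y)" by (cases \<gamma>) auto
  have L: "conv r s cmp d (gstar (Psi1 \<xi>)) (Psi1 \<eta>) \<gamma> =
     infsum (\<lambda>(z, n). gstar (Psi1 \<xi>) (x, k - n, z) * Psi1 \<eta> (z, n, y)) {(z, n). (z, n, y) \<in> G}"
    unfolding conv_def g by simp
  show ?thesis
  proof (cases "k = 0 \<and> x = y")
    case True
    have mem: "(x, k, y) \<in> G" using assms g by simp
    have ipx: "ip x" using G_paths(2)[OF mem] True by simp
    define S where "S = {(z, n). (z, n, x) \<in> G \<and> n = 1 \<and> shift 1 z = x}"
    define E where "E = {e \<in> lam1 d. s e = prange x}"
    have H0: "infsum (\<lambda>(z, n). gstar (Psi1 \<xi>) (x, k - n, z) * Psi1 \<eta> (z, n, y)) {(z, n). (z, n, y) \<in> G}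
        = infsum (\<lambda>(z, n). gstar (Psi1 \<xi>) (x, k - n, z) * Psi1 \<eta> (z, n, y)) S"
    proof (rule infsum_cong_neutral)
      fix a assume a: "a \<in> S - {(z, n). (z, n, y) \<in> G}"
      have False using a True unfolding S_def by (cases a) auto
      then show "(\<lambda>(z, n). gstar (Psi1 \<xi>) (x, k - n, z) * Psi1 \<eta> (z, n, y)) a = 0" ..
    next
      fix a assume "a \<in> {(z, n). (z, n, y) \<in> G} - S"
      then obtain z n where a: "a = (z, n)" "(z, n, y) \<in> G" "\<not> (n = 1 \<and> shift 1 z = x)"
        unfolding S_def using True by (cases a) auto
      have "Psi1 \<eta> (z, n, y) = 0"
        using a(3) True unfolding Psi1_def by auto
      then show "(\<lambda>(z, n). gstar (Psi1 \<xi>) (x, k - n, z) * Psi1 \<eta> (z, n, y)) a = 0" using a(1) by simp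
    qed simp
    have A: "concat r s cmp d (snd (fst a) 0 1) x = fst a \<and> snd a = 1 \<and> snd (fst a) 0 1 \<in> E
       \<and> cnj (\<xi> (snd (fst a) 0 1)) * \<eta> (snd (fst a) 0 1) =
          (\<lambda>(z, n). gstar (Psi1 \<xi>) (x, k - n, z) * Psi1 \<eta> (z, n, y)) a" if a: "a \<in> S" for a
    proof -
      obtain z where az: "a = (z, 1)" and m: "(z, 1, x) \<in> G" and sh: "shift 1 z = x"
        using a unfolding S_def by auto
      have ipz: "ip z" using G_one(1)[OF m] .
      have dz: "in_dom (fst z) 0 1" using G_one(4)[OF m] .
      have fz1: "enat 1 \<le> fst z" using G_one(3)[OF m] .
      have "fst (shift 1 z) = fst z - enat 1" unfolding shift_def by simp
      then have "fst z - enat 1 = fst x" using sh by simp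
      then have fz: "fst z = enat 1 + fst x" using en4[OF fz1] by simp
      have d1: "d (snd z 0 1) = 1" using pathD(1)[OF ipz dz] by simp
      have c1: "concat r s cmp d (snd z 0 1) x = z"
        using concat_uniq[OF ipx ipz, of "snd z 0 1"] fz d1 sh by simp
      have "s (snd z 0 1) = snd z 1 1" using pathD(3)[OF ipz dz] .
      also have "\<dots> = snd (shift 1 z) 0 0" unfolding shift_def in_dom_def by (simp add: zero_enat_def[symmetric])
      finally have "s (snd z 0 1) = prange x" using sh unfolding prange_def by simp
      then have c2: "snd z 0 1 \<in> E" using d1 unfolding E_def lam1_def by simp
      have c3: "cnj (\<xi> (snd z 0 1)) * \<eta> (snd z 0 1) =
          gstar (Psi1 \<xi>) (x, k - 1, z) * Psi1 \<eta> (z, 1, y)"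
        using sh True by (simp add: gstar_def Psi1_def)
      show ?thesis using az c1 c2 c3 by simp
    qed
    have B: "snd (fst (concat r s cmp d b x, 1::int)) 0 1 = b \<and> (concat r s cmp d b x, 1::int) \<in> S"
      if b: "b \<in> E" for b
    proof -
      have db: "d b = 1" and sb: "s b = prange x" using b unfolding E_def lam1_def by auto
      have c1: "snd (concat r s cmp d b x) 0 1 = b"
        using concat_props(3)[OF ipx sb] db by simp
      have dm: "in_dom (fst x) 0 0" unfolding in_dom_def by (simp add: zero_enat_def[symmetric])
      have d0: "d (snd x 0 0) = 0" using pathD(1)[OF ipx dm] by simp
      have s0: "s (snd x 0 0) = prange x" using pathD(3)[OF ipx dm] unfolding prange_def by simp
      have "(concat r s cmp d b x, int (d b) - int (d (snd x 0 0)), concat r s cmp d (snd x 0 0) x) \<in> G"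
        unfolding path_groupoid_def path_space_def using ipx sb s0 by blast
      then have "(concat r s cmp d b x, 1, x) \<in> G" using db d0 concat_vertex[OF ipx] by simp
      then have c2: "(concat r s cmp d b x, 1::int) \<in> S"
        using concat_props(4)[OF ipx sb] db unfolding S_def by simp
      show ?thesis using c1 c2 by simp
    qed
    have "infsum (\<lambda>(z, n). gstar (Psi1 \<xi>) (x, k - n, z) * Psi1 \<eta> (z, n, y)) S = infsum (\<lambda>e. cnj (\<xi> e) * \<eta> e) E"
      apply (rule infsum_reindex_bij_witness[where j = "\<lambda>a. snd (fst a) 0 1"
          and i = "\<lambda>e. (concat r s cmp d e x, 1)"])
      using A B by (auto simp: prod_eq_iff)
    also have "\<dots> = Psi0 (inner1 s d \<xi> \<eta>) \<gamma>"
      using g True unfolding Psi0_def inner1_def E_def by simp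
    finally show ?thesis using L H0 by simp
  next
    case False
    have "infsum (\<lambda>(z, n). gstar (Psi1 \<xi>) (x, k - n, z) * Psi1 \<eta> (z, n, y)) {(z, n). (z, n, y) \<in> G} = 0"
    proof (rule infsum_0)
      fix a assume "a \<in> {(z, n). (z, n, y) \<in> G}"
      obtain z n where a: "a = (z, n)" by (cases a) auto
      have "gstar (Psi1 \<xi>) (x, k - n, z) = 0 \<or> Psi1 \<eta> (z, n, y) = 0"
      proof (cases "n = 1 \<and> shift 1 z = y")
        case T: True
        then have "\<not> (- (k - n) = 1 \<and> shift 1 z = x)" using False by auto
        then have "Psi1 \<xi> (z, - (k - n), x) = 0" unfolding Psi1_def by (simp only: prod.case if_False)
        then show ?thesis unfolding gstar_def by simp
      next
        case F: False
        have "Psi1 \<eta> (z, n, y) = 0" unfolding Psi1_def by (simp only: prod.case if_not_P[OF F])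
        then show ?thesis by simp
      qed
      then show "(\<lambda>(z, n). gstar (Psi1 \<xi>) (x, k - n, z) * Psi1 \<eta> (z, n, y)) a = 0" using a by auto
    qed
    then show ?thesis using L False g by (auto simp: Psi0_def)
  qed
qed

end

lemma cat1I: assumes T: "topological_1graph r s cmp d" shows "cat1 r s cmp d"
proof -
  note A = T[unfolded topological_1graph_def]
  note h1 = A[THEN conjunct1]
  note h2 = A[THEN conjunct2, THEN conjunct1]
  note h3 = A[THEN conjunct2, THEN conjunct2, THEN conjunct1]
  note h4 = A[THEN conjunct2, THEN conjunct2, THEN conjunct2, THEN conjunct1]
  note h5 = A[THEN conjunct2, THEN conjunct2, THEN conjunct2, THEN conjunct2, THEN conjunct2, THEN conjunct2, THEN conjunct2, THEN conjunct2, THEN conjunct2, THEN conjunct2, THEN conjunct2, THEN conjunct2, THEN conjunct1]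
  note h6 = A[THEN conjunct2, THEN conjunct2, THEN conjunct2, THEN conjunct2, THEN conjunct2, THEN conjunct2, THEN conjunct2, THEN conjunct2, THEN conjunct2, THEN conjunct2, THEN conjunct2, THEN conjunct2, THEN conjunct2, THEN conjunct1]
  note h7 = A[THEN conjunct2, THEN conjunct2, THEN conjunct2, THEN conjunct2, THEN conjunct2, THEN conjunct2, THEN conjunct2, THEN conjunct2, THEN conjunct2, THEN conjunct2, THEN conjunct2, THEN conjunct2, THEN conjunct2, THEN conjunct2]
  show ?thesis
    apply unfold_locales
    using h1 h2 h3 h4 h5 h6 h7 by simp_all
qed


theorem lemma5p3:
  fixes r s :: "'a::{t2_space, second_countable_topology} \<Rightarrow> 'a"
    and cmp :: "'a \<Rightarrow> 'a \<Rightarrow> 'a" and d :: "'a \<Rightarrow> nat"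
    and f \<xi> \<eta> :: "'a \<Rightarrow> complex"
  assumes "topological_1graph r s cmp d"
    and "Cc (lam0 r) f" and "Cc (lam1 d) \<xi>" and "Cc (lam1 d) \<eta>"
  shows "(\<forall>\<gamma> \<in> path_groupoid r s cmp d.
           conv r s cmp d (gstar (Psi1 \<xi>)) (Psi1 \<eta>) \<gamma> = Psi0 (inner1 s d \<xi> \<eta>) \<gamma>) \<and>
         (\<forall>\<gamma> \<in> path_groupoid r s cmp d.
           conv r s cmp d (Psi0 f) (Psi1 \<xi>) \<gamma> = Psi1 (phi r f \<xi>) \<gamma>)"
proof -
  interpret cat1 r s cmp d by (rule cat1I[OF assms(1)])
  show ?thesis
  proof (intro conjI ballI)
    fix \<gamma> assume "\<gamma> \<in> path_groupoid r s cmp d"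
    then show "conv r s cmp d (gstar (Psi1 \<xi>)) (Psi1 \<eta>) \<gamma> = Psi0 (inner1 s d \<xi> \<eta>) \<gamma>"
      by (rule part1)
  next
    fix \<gamma> assume "\<gamma> \<in> path_groupoid r s cmp d"
    then show "conv r s cmp d (Psi0 f) (Psi1 \<xi>) \<gamma> = Psi1 (phi r f \<xi>) \<gamma>"
      by (rule part2)
  qed
qed

end
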